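(* Let $(V,\tau)$ be a topological mixed lattice space. (a) The map $Q:V\to V_p$, $Q(x)={}^ux$, is continuous and satisfies: $Q(V)=V_p$ and $Q(x)=x$ for all $x\in V_p$; $Q(tx)=tQ(x)$ for all $t\ge 0$, $x\in V$; $Q(x+y)\le Q(x)+Q(y)$ for all $x,y$; $Q(x)=0$ and $Q(-x)=0$ imply $x=0$; and $Q(x-Q(x))=0$ for all $x$. That is, $Q$ is a proper asymmetric cone norm with respect to the cone $V_p$. (b) The map $Q:V\to V_{sp}$, $Q(x)=x^u$, is continuous and satisfies: $Q(V)=V_{sp}$ and $Q(x)=x$ for all $x\in V_{sp}$; $Q(tx)=tQ(x)$ for all $t\ge0$; $Q(x+y)\le Q(x)+Q(y)$ for all $x,y$; $Q(x)=0$ and $Q(-x)=0$ imply $x=0$; $Q(x-Q(x))=0$ for all $x$. Moreover $Q$ is increasing for both orderings: $x\preccurlyeq y$ implies $Q(x)\preccurlyeq Q(y)$, and $x\le y$ implies $Q(x)\le Q(y)$.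
   Context: A mixed lattice vector space $(V,\le,\preccurlyeq)$ is a real vector space $V$ with two partial orderings $\le$ (initial order) and $\preccurlyeq$ (specific order), each making $V$ a partially ordered vector space, with positive cones $V_p=\{x:0\le x\}$, $V_{sp}=\{x:0\preccurlyeq x\}$, such that: (1) for all $x,y$ the elements $x\curlyvee y=\min\{w: w\succcurlyeq x,\ w\ge y\}$ and $x\curlywedge y=\max\{w: w\preccurlyeq x,\ w\le y\}$ exist (min/max with respect to $\le$); (2) $x\preccurlyeq y$ implies $x\le y$; (3) $x\curlyvee y, x\curlywedge y\in V_{sp}$ whenever $x,y\in V_{sp}$. A topological mixed lattice space is such a $V$ with a vector topology making $(x,y)\mapsto x\curlyvee y$ and $(x,y)\mapsto x\curlywedge y$ continuous. Notation: $x^u=0\curlyvee x$, ${}^ux=x\curlyvee 0$. Given a cone $C$ in a topological vector space $X$ with associated order $\le_C$, a continuous map $Q:X\to C$ is an asymmetric cone norm if $Q(x)=x$ for $x\in C$ and $Q(X)=C$; $Q(tx)=tQ(x)$ for $t\ge 0$; $Q(x+y)\le_C Q(x)+Q(y)$; and $Q(x)=Q(-x)=0$ implies $x=0$. It is proper if $Q(x-Q(x))=0$ for all $x$. *)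

theory Defs
  imports "HOL-Analysis.Analysis"
begin

definition pos_vector_order :: "('a::real_vector \<Rightarrow> 'a \<Rightarrow> bool) \<Rightarrow> bool" where
  "pos_vector_order r \<longleftrightarrow>
     (\<forall>x. r x x) \<and>
     (\<forall>x y. r x y \<and> r y x \<longrightarrow> x = y) \<and>
     (\<forall>x y z. r x y \<and> r y z \<longrightarrow> r x z) \<and>
     (\<forall>x y z. r x y \<longrightarrow> r (x + z) (y + z)) \<and>
     (\<forall>x y (t::real). r x y \<and> 0 \<le> t \<longrightarrow> r (t *\<^sub>R x) (t *\<^sub>R y))"

definition is_mixed_upper ::
  "('a \<Rightarrow> 'a \<Rightarrow> bool) \<Rightarrow> ('a \<Rightarrow> 'a \<Rightarrow> bool) \<Rightarrow> 'a \<Rightarrow> 'a \<Rightarrow> 'a \<Rightarrow> bool" where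
  "is_mixed_upper le sle x y w \<longleftrightarrow>
     sle x w \<and> le y w \<and> (\<forall>z. sle x z \<and> le y z \<longrightarrow> le w z)"

definition is_mixed_lower ::
  "('a \<Rightarrow> 'a \<Rightarrow> bool) \<Rightarrow> ('a \<Rightarrow> 'a \<Rightarrow> bool) \<Rightarrow> 'a \<Rightarrow> 'a \<Rightarrow> 'a \<Rightarrow> bool" where
  "is_mixed_lower le sle x y w \<longleftrightarrow>
     sle w x \<and> le w y \<and> (\<forall>z. sle z x \<and> le z y \<longrightarrow> le z w)"

definition mixed_upper ::
  "('a \<Rightarrow> 'a \<Rightarrow> bool) \<Rightarrow> ('a \<Rightarrow> 'a \<Rightarrow> bool) \<Rightarrow> 'a \<Rightarrow> 'a \<Rightarrow> 'a" where
  "mixed_upper le sle x y = (THE w. is_mixed_upper le sle x y w)"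

definition mixed_lower ::
  "('a \<Rightarrow> 'a \<Rightarrow> bool) \<Rightarrow> ('a \<Rightarrow> 'a \<Rightarrow> bool) \<Rightarrow> 'a \<Rightarrow> 'a \<Rightarrow> 'a" where
  "mixed_lower le sle x y = (THE w. is_mixed_lower le sle x y w)"

text \<open>Mixed lattice vector space (V, le, sle): le is the initial order, sle the specific order.\<close>
definition mixed_lattice_vector_space ::
  "('a::real_vector \<Rightarrow> 'a \<Rightarrow> bool) \<Rightarrow> ('a \<Rightarrow> 'a \<Rightarrow> bool) \<Rightarrow> bool" where
  "mixed_lattice_vector_space le sle \<longleftrightarrow>
     pos_vector_order le \<and> pos_vector_order sle \<and>
     (\<forall>x y. \<exists>w. is_mixed_upper le sle x y w) \<and>
     (\<forall>x y. \<exists>w. is_mixed_lower le sle x y w) \<and>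
     (\<forall>x y. sle x y \<longrightarrow> le x y) \<and>
     (\<forall>x y. sle 0 x \<and> sle 0 y \<longrightarrow>
        sle 0 (mixed_upper le sle x y) \<and> sle 0 (mixed_lower le sle x y))"

definition vector_topology :: "'a::{real_vector,topological_space} itself \<Rightarrow> bool" where
  "vector_topology _ \<longleftrightarrow>
     continuous_on UNIV (\<lambda>p::'a \<times> 'a. fst p + snd p) \<and>
     continuous_on UNIV (\<lambda>p::real \<times> 'a. fst p *\<^sub>R snd p)"

definition topological_mixed_lattice_space ::
  "('a::{real_vector,topological_space} \<Rightarrow> 'a \<Rightarrow> bool) \<Rightarrow> ('a \<Rightarrow> 'a \<Rightarrow> bool) \<Rightarrow> bool" where
  "topological_mixed_lattice_space le sle \<longleftrightarrow>
     mixed_lattice_vector_space le sle \<and> vector_topology TYPE('a) \<and>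
     continuous_on UNIV (\<lambda>p. mixed_upper le sle (fst p) (snd p)) \<and>
     continuous_on UNIV (\<lambda>p. mixed_lower le sle (fst p) (snd p))"

text \<open>x^u = 0 \<curlyvee> x   and   ^u x = x \<curlyvee> 0.\<close>
definition upart :: "('a::real_vector \<Rightarrow> 'a \<Rightarrow> bool) \<Rightarrow> ('a \<Rightarrow> 'a \<Rightarrow> bool) \<Rightarrow> 'a \<Rightarrow> 'a" where
  "upart le sle x = mixed_upper le sle 0 x"

definition lupart :: "('a::real_vector \<Rightarrow> 'a \<Rightarrow> bool) \<Rightarrow> ('a \<Rightarrow> 'a \<Rightarrow> bool) \<Rightarrow> 'a \<Rightarrow> 'a" where
  "lupart le sle x = mixed_upper le sle x 0"

end

theory Submission
  imports Defs
begin

locale mls =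
  fixes le sle :: "'a::real_vector \<Rightarrow> 'a \<Rightarrow> bool"
  assumes M: "mixed_lattice_vector_space le sle"
begin

lemma PL: "pos_vector_order le" and PS: "pos_vector_order sle"
  and EU: "\<And>x y. \<exists>w. is_mixed_upper le sle x y w"
  and EL: "\<And>x y. \<exists>w. is_mixed_lower le sle x y w"
  and SL: "\<And>x y. sle x y \<Longrightarrow> le x y"
  and A3: "\<And>x y. sle 0 x \<Longrightarrow> sle 0 y \<Longrightarrow> sle 0 (mixed_lower le sle x y)"
  using M unfolding mixed_lattice_vector_space_def by blast+

lemma pvo:
  assumes "pos_vector_order r"
  shows pvo_refl: "r x x"
    and pvo_antisym: "r x y \<Longrightarrow> r y x \<Longrightarrow> x = y"
    and pvo_trans: "r x y \<Longrightarrow> r y z \<Longrightarrow> r x z"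
    and pvo_add: "r x y \<Longrightarrow> r (x + z) (y + z)"
    and pvo_scale: "r x y \<Longrightarrow> 0 \<le> t \<Longrightarrow> r (t *\<^sub>R x) (t *\<^sub>R y)"
  using assms unfolding pos_vector_order_def by blast+

lemma pvo_add2:
  assumes "pos_vector_order r" "r a b" "r c d"
  shows "r (a + c) (b + d)"
proof -
  have "r (a + c) (b + c)" using pvo_add[OF assms(1) assms(2)] .
  moreover have "r (c + b) (d + b)" using pvo_add[OF assms(1) assms(3)] .
  hence "r (b + c) (b + d)" by (simp add: add.commute)
  ultimately show ?thesis using pvo_trans[OF assms(1)] by blast
qed

lemma pvo_diff:
  assumes "pos_vector_order r"
  shows "r x y \<longleftrightarrow> r 0 (y - x)"
proof
  assume "r x y" then have "r (x + - x) (y + - x)" by (rule pvo_add[OF assms])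
  thus "r 0 (y - x)" by simp
next
  assume "r 0 (y - x)" then have "r (0 + x) (y - x + x)" by (rule pvo_add[OF assms])
  thus "r x y" by simp
qed

lemma U: "is_mixed_upper le sle x y (mixed_upper le sle x y)"
proof -
  obtain w where w: "is_mixed_upper le sle x y w" using EU by blast
  have "\<And>v. is_mixed_upper le sle x y v \<Longrightarrow> v = w"
    using w pvo_antisym[OF PL] unfolding is_mixed_upper_def by blast
  hence "mixed_upper le sle x y = w" unfolding mixed_upper_def using w by blast
  thus ?thesis using w by simp
qed

lemma L: "is_mixed_lower le sle x y (mixed_lower le sle x y)"
proof -
  obtain w where w: "is_mixed_lower le sle x y w" using EL by blast
  have "\<And>v. is_mixed_lower le sle x y v \<Longrightarrow> v = w"
    using w pvo_antisym[OF PL] unfolding is_mixed_lower_def by blast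
  hence "mixed_lower le sle x y = w" unfolding mixed_lower_def using w by blast
  thus ?thesis using w by simp
qed

lemma U_eq: "is_mixed_upper le sle x y w \<Longrightarrow> mixed_upper le sle x y = w"
  using U[of x y] pvo_antisym[OF PL] unfolding is_mixed_upper_def by blast

lemma L_eq: "is_mixed_lower le sle x y w \<Longrightarrow> mixed_lower le sle x y = w"
  using L[of x y] pvo_antisym[OF PL] unfolding is_mixed_lower_def by blast

lemma U1: "sle x (mixed_upper le sle x y)" and U2: "le y (mixed_upper le sle x y)"
  and U3: "sle x z \<Longrightarrow> le y z \<Longrightarrow> le (mixed_upper le sle x y) z"
  using U[of x y] unfolding is_mixed_upper_def by blast+

lemma L1: "sle (mixed_lower le sle x y) x" and L2: "le (mixed_lower le sle x y) y"
  and L3: "sle z x \<Longrightarrow> le z y \<Longrightarrow> le z (mixed_lower le sle x y)"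
  using L[of x y] unfolding is_mixed_lower_def by blast+

lemma U_scale:
  assumes "0 \<le> t"
  shows "mixed_upper le sle (t *\<^sub>R x) (t *\<^sub>R y) = t *\<^sub>R mixed_upper le sle x y"
proof (cases "t = 0")
  case True
  have "is_mixed_upper le sle 0 0 0"
    unfolding is_mixed_upper_def using pvo_refl[OF PL] pvo_refl[OF PS] SL by blast
  thus ?thesis using True U_eq by simp
next
  case False
  hence t: "t > 0" using assms by simp
  let ?w = "mixed_upper le sle x y"
  have "is_mixed_upper le sle (t *\<^sub>R x) (t *\<^sub>R y) (t *\<^sub>R ?w)"
    unfolding is_mixed_upper_def
  proof (intro conjI allI impI)
    show "sle (t *\<^sub>R x) (t *\<^sub>R ?w)" using pvo_scale[OF PS U1] assms by blast
    show "le (t *\<^sub>R y) (t *\<^sub>R ?w)" using pvo_scale[OF PL U2] assms by blast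
    fix z assume z: "sle (t *\<^sub>R x) z \<and> le (t *\<^sub>R y) z"
    have "sle ((1/t) *\<^sub>R (t *\<^sub>R x)) ((1/t) *\<^sub>R z)" using pvo_scale[OF PS, of "t *\<^sub>R x" z "1/t"] z t by simp
    hence a: "sle x ((1/t) *\<^sub>R z)" using t by simp
    have "le ((1/t) *\<^sub>R (t *\<^sub>R y)) ((1/t) *\<^sub>R z)" using pvo_scale[OF PL, of "t *\<^sub>R y" z "1/t"] z t by simp
    hence b: "le y ((1/t) *\<^sub>R z)" using t by simp
    have "le ?w ((1/t) *\<^sub>R z)" using U3[OF a b] .
    hence "le (t *\<^sub>R ?w) (t *\<^sub>R ((1/t) *\<^sub>R z))" using pvo_scale[OF PL, of ?w "(1/t) *\<^sub>R z" t] t by simp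
    thus "le (t *\<^sub>R ?w) z" using t by simp
  qed
  thus ?thesis using U_eq by blast
qed

lemma U_mono2:
  assumes "sle z t"
  shows "sle (mixed_upper le sle p z) (mixed_upper le sle p t)"
proof -
  define A where "A = mixed_upper le sle p z"
  define B where "B = mixed_upper le sle p t"
  define d where "d = t - z"
  have d0: "sle 0 d" using assms pvo_diff[OF PS] d_def by blast
  have dl: "le 0 d" using SL[OF d0] .
  have Ap: "sle p A" "le z A" using U1 U2 A_def by auto
  have Bp: "sle p B" "le t B" using U1 U2 B_def by auto
  have "sle (A + 0) (A + d)" using pvo_add2[OF PS pvo_refl[OF PS] d0] .
  hence "sle p (A + d)" using Ap pvo_trans[OF PS] by simp
  moreover have "le (z + d) (A + d)" using pvo_add[OF PL Ap(2)] .
  hence "le t (A + d)" using d_def by simp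
  ultimately have BA: "le B (A + d)" using U3 B_def by blast
  define C where "C = mixed_lower le sle B A"
  have C1: "sle C B" "le C A" using L1 L2 C_def by auto
  have "sle (B - d) (B - 0)" using pvo_add2[OF PS pvo_refl[OF PS, of B], of "-d" "-0"]
    pvo_diff[OF PS, of "-d" 0] d0 by simp
  hence s1: "sle (B - d) B" by simp
  have "le (B + - d) (A + d + - d)" using pvo_add[OF PL BA] .
  hence s2: "le (B - d) A" by simp
  have BdC: "le (B - d) C" using L3[OF s1 s2] C_def by simp
  have "le (t + - d) (B + - d)" using pvo_add[OF PL Bp(2)] .
  moreover have "t + - d = z" "B + - d = B - d" using d_def by auto
  ultimately have "le z (B - d)" by simp
  hence zC: "le z C" using BdC pvo_trans[OF PL] by blast
  \<comment> \<open>C is above p in sle, via A3 and translation\<close>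
  have "is_mixed_lower le sle (B - p) (A - p) (C - p)"
    unfolding is_mixed_lower_def
  proof (intro conjI allI impI)
    show "sle (C - p) (B - p)" using pvo_add[OF PS C1(1), of "-p"] by simp
    show "le (C - p) (A - p)" using pvo_add[OF PL C1(2), of "-p"] by simp
    fix v assume v: "sle v (B - p) \<and> le v (A - p)"
    have "sle (v + p) B" using pvo_add[OF PS, of v "B - p" p] v by simp
    moreover have "le (v + p) A" using pvo_add[OF PL, of v "A - p" p] v by simp
    ultimately have "le (v + p) C" using L3 C_def by blast
    thus "le v (C - p)" using pvo_add[OF PL, of "v + p" C "-p"] by simp
  qed
  hence "mixed_lower le sle (B - p) (A - p) = C - p" by (rule L_eq)
  moreover have "sle 0 (B - p)" "sle 0 (A - p)" using Ap Bp pvo_diff[OF PS] by blast+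
  ultimately have "sle 0 (C - p)" using A3 by metis
  hence "sle p C" using pvo_diff[OF PS] by blast
  hence "le A C" using U3 zC A_def by blast
  hence "A = C" using C1(2) pvo_antisym[OF PL] by blast
  thus ?thesis using C1(1) A_def B_def by simp
qed

end


theorem theorem5p2:
  fixes le sle :: "'a::{real_vector,topological_space} \<Rightarrow> 'a \<Rightarrow> bool"
  assumes "topological_mixed_lattice_space le sle"
  defines "Vp \<equiv> {x. le 0 x}" and "Vsp \<equiv> {x. sle 0 x}"
  shows
   "(let Q = lupart le sle in
      continuous_on UNIV Q \<and>
      Q ` UNIV = Vp \<and> (\<forall>x\<in>Vp. Q x = x) \<and>
      (\<forall>(t::real) x. 0 \<le> t \<longrightarrow> Q (t *\<^sub>R x) = t *\<^sub>R Q x) \<and>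
      (\<forall>x y. le (Q (x + y)) (Q x + Q y)) \<and>
      (\<forall>x. Q x = 0 \<and> Q (- x) = 0 \<longrightarrow> x = 0) \<and>
      (\<forall>x. Q (x - Q x) = 0))
    \<and>
    (let Q = upart le sle in
      continuous_on UNIV Q \<and>
      Q ` UNIV = Vsp \<and> (\<forall>x\<in>Vsp. Q x = x) \<and>
      (\<forall>(t::real) x. 0 \<le> t \<longrightarrow> Q (t *\<^sub>R x) = t *\<^sub>R Q x) \<and>
      (\<forall>x y. le (Q (x + y)) (Q x + Q y)) \<and>
      (\<forall>x. Q x = 0 \<and> Q (- x) = 0 \<longrightarrow> x = 0) \<and>
      (\<forall>x. Q (x - Q x) = 0) \<and>
      (\<forall>x y. sle x y \<longrightarrow> sle (Q x) (Q y)) \<and>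
      (\<forall>x y. le x y \<longrightarrow> le (Q x) (Q y)))"
proof -
  have T: "mixed_lattice_vector_space le sle"
    and C: "continuous_on UNIV (\<lambda>p. mixed_upper le sle (fst p) (snd p))"
    using assms(1) unfolding topological_mixed_lattice_space_def by blast+
  interpret mls le sle using T by unfold_locales
  have cont: "continuous_on UNIV (\<lambda>x. mixed_upper le sle (fst (f x)) (snd (f x)))"
    if "continuous_on UNIV f" for f :: "'a \<Rightarrow> 'a \<times> 'a"
    using continuous_on_compose2[OF C that] by simp
  have c1: "continuous_on UNIV (lupart le sle)"
    using cont[of "\<lambda>x. (x, 0)"] unfolding lupart_def
    by (simp add: continuous_on_Pair continuous_on_id continuous_on_const)
  have c2: "continuous_on UNIV (upart le sle)"
    using cont[of "\<lambda>x. (0, x)"] unfolding upart_def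
    by (simp add: continuous_on_Pair continuous_on_id continuous_on_const)
  let ?Q = "lupart le sle"
  have a1: "le 0 (?Q x)" for x unfolding lupart_def by (rule U2)
  have a2: "?Q x = x" if "le 0 x" for x
  proof -
    have "is_mixed_upper le sle x 0 x"
      unfolding is_mixed_upper_def using that pvo_refl[OF PS, of x] SL by blast
    thus ?thesis unfolding lupart_def by (rule U_eq)
  qed
  have a3: "?Q (t *\<^sub>R x) = t *\<^sub>R ?Q x" if "0 \<le> t" for t x
    using U_scale[OF that, of x 0] unfolding lupart_def by simp
  have a4: "le (?Q (x + y)) (?Q x + ?Q y)" for x y
  proof -
    have "le (0 + 0) (?Q x + ?Q y)" unfolding lupart_def by (rule pvo_add2[OF PL U2 U2])
    hence l: "le 0 (?Q x + ?Q y)" by simp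
    have s: "sle (x + y) (?Q x + ?Q y)" unfolding lupart_def by (rule pvo_add2[OF PS U1 U1])
    show ?thesis using U3[OF s l] unfolding lupart_def .
  qed
  have a5: "x = 0" if "?Q x = 0" "?Q (- x) = 0" for x
  proof -
    have "sle x 0" using U1[of x 0] that unfolding lupart_def by simp
    moreover have "sle (- x) 0" using U1[of "-x" 0] that unfolding lupart_def by simp
    hence "sle (- x + x) (0 + x)" by (rule pvo_add[OF PS])
    hence "sle 0 x" by simp
    ultimately show ?thesis using pvo_antisym[OF PS] by blast
  qed
  have a6: "?Q (x - ?Q x) = 0" for x
  proof -
    have "sle x (?Q x)" using U1 unfolding lupart_def by simp
    hence "sle (x - ?Q x) 0" using pvo_add[OF PS, of x "?Q x" "- ?Q x"] by simp
    hence "le (?Q (x - ?Q x)) 0" unfolding lupart_def using U3 pvo_refl[OF PL] by blast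
    thus ?thesis using a1 pvo_antisym[OF PL] by blast
  qed
  have a0: "?Q ` UNIV = Vp"
  proof
    show "?Q ` UNIV \<subseteq> Vp" using a1 unfolding Vp_def by blast
    show "Vp \<subseteq> ?Q ` UNIV"
    proof
      fix x assume "x \<in> Vp"
      hence "?Q x = x" using a2 unfolding Vp_def by blast
      thus "x \<in> ?Q ` UNIV" by (metis rangeI)
    qed
  qed
  have a2': "\<forall>x\<in>Vp. ?Q x = x" using a2 unfolding Vp_def by blast
  let ?P = "upart le sle"
  have b1: "sle 0 (?P x)" for x unfolding upart_def by (rule U1)
  have b2: "?P x = x" if "sle 0 x" for x
  proof -
    have "is_mixed_upper le sle 0 x x"
      unfolding is_mixed_upper_def using that pvo_refl[OF PL, of x] by blast
    thus ?thesis unfolding upart_def by (rule U_eq)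
  qed
  have b3: "?P (t *\<^sub>R x) = t *\<^sub>R ?P x" if "0 \<le> t" for t x
    using U_scale[OF that, of 0 x] unfolding upart_def by simp
  have b4: "le (?P (x + y)) (?P x + ?P y)" for x y
  proof -
    have "sle (0 + 0) (?P x + ?P y)" unfolding upart_def by (rule pvo_add2[OF PS U1 U1])
    hence l: "sle 0 (?P x + ?P y)" by simp
    have s: "le (x + y) (?P x + ?P y)" unfolding upart_def by (rule pvo_add2[OF PL U2 U2])
    show ?thesis using U3[OF l s] unfolding upart_def .
  qed
  have b5: "x = 0" if "?P x = 0" "?P (- x) = 0" for x
  proof -
    have "le x 0" using U2[where x=0 and y=x] that unfolding upart_def by simp
    moreover have "le (- x) 0" using U2[where x=0 and y="-x"] that unfolding upart_def by simp
    hence "le (- x + x) (0 + x)" by (rule pvo_add[OF PL])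
    hence "le 0 x" by simp
    ultimately show ?thesis using pvo_antisym[OF PL] by blast
  qed
  have b6: "?P (x - ?P x) = 0" for x
  proof -
    have "le x (?P x)" using U2 unfolding upart_def by simp
    hence "le (x - ?P x) 0" using pvo_add[OF PL, of x "?P x" "- ?P x"] by simp
    hence "le (?P (x - ?P x)) 0" unfolding upart_def using U3 pvo_refl[OF PS] by blast
    moreover have "le 0 (?P (x - ?P x))" using SL[OF b1] .
    ultimately show ?thesis using pvo_antisym[OF PL] by blast
  qed
  have b0: "?P ` UNIV = Vsp"
  proof
    show "?P ` UNIV \<subseteq> Vsp" using b1 unfolding Vsp_def by blast
    show "Vsp \<subseteq> ?P ` UNIV"
    proof
      fix x assume "x \<in> Vsp"
      hence "?P x = x" using b2 unfolding Vsp_def by blast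
      thus "x \<in> ?P ` UNIV" by (metis rangeI)
    qed
  qed
  have b2': "\<forall>x\<in>Vsp. ?P x = x" using b2 unfolding Vsp_def by blast
  have b7: "sle (?P x) (?P y)" if "sle x y" for x y
    using U_mono2[OF that] unfolding upart_def .
  have b8: "le (?P x) (?P y)" if "le x y" for x y
  proof -
    have "le x (?P y)" using pvo_trans[OF PL that U2[where x=0 and y=y]] unfolding upart_def .
    thus ?thesis using U3[OF U1[of 0 y]] unfolding upart_def by blast
  qed
  have A3: "\<forall>(t::real) x. 0 \<le> t \<longrightarrow> ?Q (t *\<^sub>R x) = t *\<^sub>R ?Q x" by (intro allI impI) (rule a3)
  have A4: "\<forall>x y. le (?Q (x + y)) (?Q x + ?Q y)" by (intro allI impI) (rule a4)
  have A5: "\<forall>x. ?Q x = 0 \<and> ?Q (- x) = 0 \<longrightarrow> x = 0" by (intro allI impI, elim conjE) (rule a5)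
  have A6: "\<forall>x. ?Q (x - ?Q x) = 0" by (intro allI impI) (rule a6)
  have B3: "\<forall>(t::real) x. 0 \<le> t \<longrightarrow> ?P (t *\<^sub>R x) = t *\<^sub>R ?P x" by (intro allI impI) (rule b3)
  have B4: "\<forall>x y. le (?P (x + y)) (?P x + ?P y)" by (intro allI impI) (rule b4)
  have B5: "\<forall>x. ?P x = 0 \<and> ?P (- x) = 0 \<longrightarrow> x = 0" by (intro allI impI, elim conjE) (rule b5)
  have B6: "\<forall>x. ?P (x - ?P x) = 0" by (intro allI impI) (rule b6)
  have B7: "\<forall>x y. sle x y \<longrightarrow> sle (?P x) (?P y)" by (intro allI impI) (rule b7)
  have B8: "\<forall>x y. le x y \<longrightarrow> le (?P x) (?P y)" by (intro allI impI) (rule b8)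
  show ?thesis
    unfolding Let_def
    using c1 a0 a2' A3 A4 A5 A6 c2 b0 b2' B3 B4 B5 B6 B7 B8
    by (intro conjI) assumption+
qed

end
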